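(* Let $S$ be a finite set of states, $A$ a finite set of action profiles, and $Y$, $Y'$ finite sets of public signals. Let $q(\cdot\mid s)\in\Delta(S)$ for each $s\in S$ be an action-independent state transition, and let $S(s)=\{t\in S: q(t\mid s)>0\}$. Let $f(\cdot\mid s,t,a)\in\Delta(Y)$ and $f'(\cdot\mid s,t,a)\in\Delta(Y')$ for all $(s,t,a)\in S\times S\times A$, and define the monitoring structures $\Pi$ and $\Pi'$ by $$p(t,y\mid s,a)=f(y\mid s,t,a)\,q(t\mid s),\qquad p'(t',y'\mid s,a)=f'(y'\mid s,t',a)\,q(t'\mid s).$$ Suppose that for every $s\in S$ and every $t\in S(s)$ there exists $t'\in S(s)$ such that $f'$ conditional on $(s,t')$ is more WG-informative than $f$ conditional on $(s,t)$. Then $\Pi$ is a weighted garbling of $\Pi'$.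
   Context: Definitions. (i) $f'$ conditional on $(s,t')$ is more WG-informative than $f$ conditional on $(s,t)$ if there exist weights $\gamma^{y'}\ge 0$ and distributions $\phi(\cdot\mid y')\in\Delta(Y)$, for $y'\in Y'$, such that $f(y\mid s,t,a)=\sum_{y'\in Y'}\gamma^{y'}\phi(y\mid y')f'(y'\mid s,t',a)$ for all $y\in Y$ and all $a\in A$. (ii) A monitoring structure $\Pi$, given by $p(t,y\mid s,a)$ (probability that the next state is $t$ and the public signal is $y$ when the current state is $s$ and action profile $a$ is played), is a weighted garbling of $\Pi'$, given by $p'(t',y'\mid s,a)$ on $S\times Y'$, if for every $s\in S$ there exist weights $\gamma_s^{t',y'}\ge 0$ and distributions $\phi_s(\cdot,\cdot\mid t',y')\in\Delta(S\times Y)$, for $(t',y')\in S\times Y'$, such that $p(t,y\mid s,a)=\sum_{(t',y')\in S\times Y'}\gamma_s^{t',y'}\phi_s(t,y\mid t',y')\,p'(t',y'\mid s,a)$ for all $(t,y)\in S\times Y$ and all $a\in A$. *)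

theory Defs
  imports Complex_Main
begin

definition is_dist :: "('x::finite \<Rightarrow> real) \<Rightarrow> bool" where
  "is_dist d \<longleftrightarrow> (\<forall>x. 0 \<le> d x) \<and> (\<Sum>x\<in>UNIV. d x) = 1"

text \<open>Signal distributions are written f s t a y = f(y | s,t,a).
  more_WG_informative f' s t' f s t: f' conditional on (s,t') is more
  WG-informative than f conditional on (s,t).\<close>
definition more_WG_informative ::
  "('s \<Rightarrow> 's \<Rightarrow> 'a \<Rightarrow> 'y'::finite \<Rightarrow> real) \<Rightarrow> 's \<Rightarrow> 's \<Rightarrow>
   ('s \<Rightarrow> 's \<Rightarrow> 'a \<Rightarrow> 'y::finite \<Rightarrow> real) \<Rightarrow> 's \<Rightarrow> 's \<Rightarrow> bool" where
  "more_WG_informative f' s t' f s0 t \<longleftrightarrow>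
     (\<exists>(\<gamma> :: 'y' \<Rightarrow> real) (\<phi> :: 'y' \<Rightarrow> 'y \<Rightarrow> real).
        (\<forall>y'. 0 \<le> \<gamma> y') \<and> (\<forall>y'. is_dist (\<phi> y')) \<and>
        (\<forall>y a. f s0 t a y = (\<Sum>y'\<in>UNIV. \<gamma> y' * \<phi> y' y * f' s t' a y')))"

text \<open>Monitoring structures are written p s a (t,y) = p(t,y | s,a).
  weighted_garbling p p': p is a weighted garbling of p'.\<close>
definition weighted_garbling ::
  "('s::finite \<Rightarrow> 'a \<Rightarrow> 's \<times> 'y::finite \<Rightarrow> real) \<Rightarrow>
   ('s \<Rightarrow> 'a \<Rightarrow> 's \<times> 'y'::finite \<Rightarrow> real) \<Rightarrow> bool" where
  "weighted_garbling p p' \<longleftrightarrow>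
     (\<forall>s. \<exists>(\<gamma> :: 's \<times> 'y' \<Rightarrow> real) (\<phi> :: 's \<times> 'y' \<Rightarrow> 's \<times> 'y \<Rightarrow> real).
        (\<forall>z'. 0 \<le> \<gamma> z') \<and> (\<forall>z'. is_dist (\<phi> z')) \<and>
        (\<forall>z a. p s a z = (\<Sum>z'\<in>UNIV. \<gamma> z' * \<phi> z' z * p' s a z')))"

end

theory Submission
  imports Defs
begin

lemma factor_weights:
  fixes w :: "'z::finite \<Rightarrow> 'x::finite \<Rightarrow> real"
  assumes "\<And>z x. 0 \<le> w z x"
  shows "\<exists>\<Gamma> \<Phi>. (\<forall>z. 0 \<le> \<Gamma> z) \<and> (\<forall>z. is_dist (\<Phi> z)) \<and> (\<forall>z x. w z x = \<Gamma> z * \<Phi> z x)"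
proof -
  define G where "G z = (\<Sum>x\<in>UNIV. w z x)" for z
  define P where "P z = (if G z = 0 then (\<lambda>x. if x = undefined then 1 else 0) else (\<lambda>x. w z x / G z))" for z
  have G0: "0 \<le> G z" for z unfolding G_def using assms by (simp add: sum_nonneg)
  have "is_dist (P z)" for z
  proof (cases "G z = 0")
    case True then show ?thesis by (simp add: P_def is_dist_def)
  next
    case False
    then show ?thesis using G0[of z] assms
      by (simp add: P_def is_dist_def sum_divide_distrib[symmetric] G_def[symmetric])
  qed
  moreover have "w z x = G z * P z x" for z x
  proof (cases "G z = 0")
    case True
    then have "\<forall>x\<in>UNIV. w z x = 0" unfolding G_def
      using sum_nonneg_eq_0_iff[of UNIV "w z"] assms by simp
    then show ?thesis using True by simp
  next
    case False then show ?thesis by (simp add: P_def)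
  qed
  ultimately show ?thesis using G0 by blast
qed

theorem mainTheorem1:
  fixes q :: "'s::finite \<Rightarrow> 's \<Rightarrow> real"
    and f :: "'s \<Rightarrow> 's \<Rightarrow> 'a::finite \<Rightarrow> 'y::finite \<Rightarrow> real"
    and f' :: "'s \<Rightarrow> 's \<Rightarrow> 'a \<Rightarrow> 'y'::finite \<Rightarrow> real"
  assumes q_dist: "\<And>s. is_dist (q s)"
    and f_dist: "\<And>s t a. is_dist (f s t a)"
    and f'_dist: "\<And>s t a. is_dist (f' s t a)"
    and hyp: "\<And>s t. q s t > 0 \<Longrightarrow>
               \<exists>t'. q s t' > 0 \<and> more_WG_informative f' s t' f s t"
  shows "weighted_garbling (\<lambda>s a (t, y). f s t a y * q s t)
                           (\<lambda>s a (t', y'). f' s t' a y' * q s t')"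
  unfolding weighted_garbling_def
proof
  fix s
  have qnn: "0 \<le> q s t" for t using q_dist[of s] by (simp add: is_dist_def)
  have "\<forall>t. \<exists>t' g ph. 0 < q s t \<longrightarrow> (q s t' > 0 \<and> (\<forall>y'. 0 \<le> g y') \<and> (\<forall>y'. is_dist (ph y')) \<and>
        (\<forall>y a. f s t a y = (\<Sum>y'\<in>UNIV. g y' * ph y' y * f' s t' a y')))"
    using hyp[of s] unfolding more_WG_informative_def by blast
  then obtain \<tau> :: "'s \<Rightarrow> 's" and g :: "'s \<Rightarrow> 'y' \<Rightarrow> real" and ph :: "'s \<Rightarrow> 'y' \<Rightarrow> 'y \<Rightarrow> real" where
    H: "\<And>t. 0 < q s t \<Longrightarrow> q s (\<tau> t) > 0 \<and> (\<forall>y'. 0 \<le> g t y') \<and> (\<forall>y'. is_dist (ph t y')) \<and>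
        (\<forall>y a. f s t a y = (\<Sum>y'\<in>UNIV. g t y' * ph t y' y * f' s (\<tau> t) a y'))"
    apply -
    apply (drule choice, erule exE)
    apply (drule choice, erule exE)
    apply (drule choice, erule exE)
    by blast
  have phnn: "0 < q s t \<Longrightarrow> 0 \<le> ph t y' y" for t y' y
    using H[of t] by (simp add: is_dist_def)
  define w where "w = (\<lambda>(t',y') (t,y). if \<tau> t = t' \<and> 0 < q s t
      then g t y' * q s t / q s t' * ph t y' y else (0::real))"
  have wnn: "0 \<le> w z x" for z x
    using H phnn qnn unfolding w_def
    by (auto split: prod.splits intro!: mult_nonneg_nonneg divide_nonneg_nonneg)
  obtain \<Gamma> \<Phi> where GP: "\<forall>z. 0 \<le> \<Gamma> z" "\<forall>z. is_dist (\<Phi> z)" "\<forall>z x. w z x = \<Gamma> z * \<Phi> z x"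
    using factor_weights[of w] wnn by blast
  have eq: "(case z of (t, y) \<Rightarrow> f s t a y * q s t) =
      (\<Sum>z'\<in>UNIV. \<Gamma> z' * \<Phi> z' z * (case z' of (t', y') \<Rightarrow> f' s t' a y' * q s t'))" for z a
  proof (cases z)
    case (Pair t y)
    have "(\<Sum>z'\<in>UNIV. \<Gamma> z' * \<Phi> z' z * (case z' of (t', y') \<Rightarrow> f' s t' a y' * q s t'))
        = (\<Sum>z'\<in>UNIV. w z' z * (case z' of (t', y') \<Rightarrow> f' s t' a y' * q s t'))"
      using GP(3) by (metis (no_types, lifting))
    also have "\<dots> = (\<Sum>t'\<in>UNIV. \<Sum>y'\<in>UNIV. w (t',y') (t,y) * (f' s t' a y' * q s t'))"
      unfolding Pair UNIV_Times_UNIV[symmetric] sum.cartesian_product by (intro sum.cong) (auto split: prod.splits)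
    also have "\<dots> = f s t a y * q s t"
    proof (cases "0 < q s t")
      case True
      note Ht = H[OF True]
      have "(\<Sum>t'\<in>UNIV. \<Sum>y'\<in>UNIV. w (t',y') (t,y) * (f' s t' a y' * q s t'))
          = (\<Sum>t'\<in>UNIV. if t' = \<tau> t then (\<Sum>y'\<in>UNIV. w (t',y') (t,y) * (f' s t' a y' * q s t')) else 0)"
        by (rule sum.cong) (auto simp: w_def)
      also have "\<dots> = (\<Sum>y'\<in>UNIV. w (\<tau> t,y') (t,y) * (f' s (\<tau> t) a y' * q s (\<tau> t)))"
        by simp
      also have "\<dots> = (\<Sum>y'\<in>UNIV. q s t * (g t y' * ph t y' y * f' s (\<tau> t) a y'))"
        using Ht True by (intro sum.cong) (auto simp: w_def)
      also have "\<dots> = q s t * f s t a y"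
        using Ht by (simp add: sum_distrib_left)
      finally show ?thesis by simp
    next
      case False
      then have "q s t = 0" using qnn[of t] by simp
      then show ?thesis using False by (simp add: w_def)
    qed
    finally show ?thesis using Pair by simp
  qed
  show "\<exists>\<Gamma> \<Phi>. (\<forall>z'. 0 \<le> \<Gamma> z') \<and> (\<forall>z'. is_dist (\<Phi> z')) \<and>
      (\<forall>z a. (case z of (t, y) \<Rightarrow> f s t a y * q s t) =
         (\<Sum>z'\<in>UNIV. \<Gamma> z' * \<Phi> z' z * (case z' of (t', y') \<Rightarrow> f' s t' a y' * q s t')))"
    using GP eq by blast
qed

end
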